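(* Let $V=\bigoplus_{i<0}V_i$ be a finite-dimensional graded $\mathbb K$-vector space and $\mathfrak g\subset\mathfrak{gl}(V)$ a reductive Lie subalgebra with $\mathfrak g=\bigoplus_k\mathfrak g_k$, $\mathfrak g_k=\mathfrak g\cap\mathfrak{gl}(V)_k$. Let $0\ne\delta\in\mathfrak g_{-1}$, $\mathfrak m=\mathbb K\delta$, and let $H\in\mathfrak g_0$, $Y\in\mathfrak g_1$ satisfy $[H,\delta]=2\delta$, $[H,Y]=-2Y$, $[\delta,Y]=H$ (such elements exist). Then $\mathfrak s=\operatorname{span}\{\delta,H,Y\}\cong\mathfrak{sl}_2$ is contained in $\mathfrak u(\mathfrak m)$, and $\mathfrak u(\mathfrak m)$ is the semidirect sum of $\mathfrak s$ and the ideal $\mathfrak n_{\max}(\mathfrak m)$; in particular $\dim\mathfrak u(\mathfrak m)/\mathfrak n_{\max}(\mathfrak m)=3$, $\mathfrak n_{\max}(\mathfrak m)$ is an $\mathfrak{sl}_2$-module (under $\operatorname{ad}\mathfrak s$), and $\mathfrak n_{\max}(\mathfrak m)=\mathfrak n_{ne}(\mathfrak m)$.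
   Context: $\mathfrak{gl}(V)_k=\bigoplus_i\operatorname{Hom}(V_i,V_{i+k})$. Universal algebraic prolongation: $\mathfrak u_{-1}=\mathfrak m$, $\mathfrak u_k=\{X\in\mathfrak g_k:[X,\delta']\in\mathfrak u_{k-1}\ \forall\delta'\in\mathfrak m\}$ for $k\ge0$, $\mathfrak u(\mathfrak m)=\bigoplus_{k\ge-1}\mathfrak u_k$ (a graded subalgebra of $\mathfrak g$). $\mathfrak n_{\max}(\mathfrak m)$ is the largest ideal of $\mathfrak u(\mathfrak m)$ contained in $\bigoplus_{i\ge0}\mathfrak u_i$. Let $V^i=\bigoplus_{j\ge i}V_j$ and let $\Gamma$ be the curve $t\mapsto\{e^{t\delta}V^i\}_i$ in the corresponding flag manifold of $V$; each $X\in\mathfrak{gl}(V)$ induces a vector field on that flag manifold, and $\mathfrak u(\mathfrak m)$ consists of elements whose vector fields are tangent to $\Gamma$. $\mathfrak n_{ne}(\mathfrak m)$ (non-effectiveness ideal) is the set of $X\in\mathfrak u(\mathfrak m)$ whose induced vector field vanishes identically along $\Gamma$. *)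

theory Defs
  imports "HOL-Analysis.Finite_Cartesian_Product"
begin

text \<open>
  Model: V = K^n with a basis of homogeneous vectors; the basis vector e_j has degree
  deg j (all degrees negative).  gl(V) is the space of n x n matrices 'a^'n^'n, where
  the entry A$i$j is the coefficient of e_i in A e_j.
\<close>

type_synonym ('a,'n) gl = "'a^'n^'n"

definition scaleM :: "'a::times \<Rightarrow> 'a^'n^'n \<Rightarrow> 'a^'n^'n" where
  "scaleM c A = (\<chi> i j. c * A$i$j)"

definition bracket :: "'a::ring_1^'n^'n \<Rightarrow> 'a^'n^'n \<Rightarrow> 'a^'n^'n" where
  "bracket A B = A ** B - B ** A"

definition mpow :: "'a::semiring_1^'n^'n \<Rightarrow> nat \<Rightarrow> 'a^'n^'n" where
  "mpow A k = ((\<lambda>B. A ** B) ^^ k) (mat 1)"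

text \<open>Exponential e^{tA}; for the nilpotent matrices used here (A^(CARD('n)) = 0) this
  truncated series is the exact exponential.\<close>
definition expM :: "'a::field_char_0 \<Rightarrow> 'a^'n::finite^'n \<Rightarrow> 'a^'n^'n" where
  "expM t A = (\<Sum>k<CARD('n). scaleM (t^k / fact k) (mpow A k))"

definition homog :: "('n \<Rightarrow> int) \<Rightarrow> int \<Rightarrow> 'a::zero^'n^'n \<Rightarrow> bool" where
  "homog deg k A \<longleftrightarrow> (\<forall>i j. A$i$j \<noteq> 0 \<longrightarrow> deg i = deg j + k)"

definition comp :: "('n \<Rightarrow> int) \<Rightarrow> int \<Rightarrow> 'a::zero^'n^'n \<Rightarrow> 'a^'n^'n" where
  "comp deg k A = (\<chi> i j. if deg i = deg j + k then A$i$j else 0)"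

definition msubspace :: "('a::ring_1^'n^'n) set \<Rightarrow> bool" where
  "msubspace S \<longleftrightarrow> 0 \<in> S \<and> (\<forall>A\<in>S. \<forall>B\<in>S. A + B \<in> S) \<and> (\<forall>c. \<forall>A\<in>S. scaleM c A \<in> S)"

definition lie_subalgebra :: "('a::ring_1^'n^'n) set \<Rightarrow> bool" where
  "lie_subalgebra L \<longleftrightarrow> msubspace L \<and> (\<forall>A\<in>L. \<forall>B\<in>L. bracket A B \<in> L)"

definition lie_ideal :: "('a::ring_1^'n^'n) set \<Rightarrow> ('a^'n^'n) set \<Rightarrow> bool" where
  "lie_ideal L I \<longleftrightarrow> msubspace I \<and> I \<subseteq> L \<and> (\<forall>A\<in>L. \<forall>B\<in>I. bracket A B \<in> I)"

text \<open>Reductive: the adjoint representation is completely reducible, i.e. every ideal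
  has a complementary ideal.\<close>
definition reductive :: "('a::ring_1^'n^'n) set \<Rightarrow> bool" where
  "reductive L \<longleftrightarrow> lie_subalgebra L \<and>
     (\<forall>I. lie_ideal L I \<longrightarrow> (\<exists>J. lie_ideal L J \<and> I \<inter> J = {0} \<and> {A + B |A B. A \<in> I \<and> B \<in> J} = L))"

text \<open>g is graded: g = \<Oplus>_k g_k with g_k = g \<inter> gl(V)_k.\<close>
definition graded_sub :: "('n \<Rightarrow> int) \<Rightarrow> ('a::ring_1^'n^'n) set \<Rightarrow> bool" where
  "graded_sub deg L \<longleftrightarrow> (\<forall>A\<in>L. \<forall>k. comp deg k A \<in> L)"

definition line :: "'a::ring_1^'n^'n \<Rightarrow> ('a^'n^'n) set" where
  "line d = {scaleM c d |c. True}"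

text \<open>Universal algebraic prolongation inside g: prol deg g d k = u_{k-1}.\<close>
fun prol :: "('n \<Rightarrow> int) \<Rightarrow> ('a::ring_1^'n^'n) set \<Rightarrow> 'a^'n^'n \<Rightarrow> nat \<Rightarrow> ('a^'n^'n) set" where
  "prol deg g d 0 = line d"
| "prol deg g d (Suc k) =
     {X \<in> g. homog deg (int k) X \<and> (\<forall>d'\<in>line d. bracket X d' \<in> prol deg g d k)}"

definition uk :: "('n \<Rightarrow> int) \<Rightarrow> ('a::ring_1^'n^'n) set \<Rightarrow> 'a^'n^'n \<Rightarrow> int \<Rightarrow> ('a^'n^'n) set" where
  "uk deg g d k = prol deg g d (nat (k + 1))"

definition umax :: "('n \<Rightarrow> int) \<Rightarrow> ('a::ring_1^'n^'n) set \<Rightarrow> 'a^'n^'n \<Rightarrow> ('a^'n^'n) set" where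
  "umax deg g d = {X. (\<forall>k. k < -1 \<longrightarrow> comp deg k X = 0) \<and> (\<forall>k\<ge>-1. comp deg k X \<in> uk deg g d k)}"

text \<open>n_max(m): the largest ideal of u(m) contained in \<Oplus>_{i\<ge>0} u_i
  (the union of all such ideals, which is itself such an ideal).\<close>
definition nmax :: "('n \<Rightarrow> int) \<Rightarrow> ('a::ring_1^'n^'n) set \<Rightarrow> 'a^'n^'n \<Rightarrow> ('a^'n^'n) set" where
  "nmax deg g d = \<Union>{I. lie_ideal (umax deg g d) I \<and>
       I \<subseteq> {X \<in> umax deg g d. \<forall>k<0. comp deg k X = 0}}"

definition filt :: "('n \<Rightarrow> int) \<Rightarrow> int \<Rightarrow> ('a::zero^'n) set" where
  "filt deg i = {v. \<forall>j. deg j < i \<longrightarrow> v$j = 0}"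

text \<open>n_ne(m): elements of u(m) whose induced vector field on the flag manifold vanishes
  along the curve t \<mapsto> {e^{t delta} V^i}_i, i.e. which preserve every flag of the curve.\<close>
definition nne :: "('n::finite \<Rightarrow> int) \<Rightarrow> ('a::field_char_0^'n^'n) set \<Rightarrow> 'a^'n^'n \<Rightarrow> ('a^'n^'n) set" where
  "nne deg g d = {X \<in> umax deg g d. \<forall>t i. \<forall>v \<in> (\<lambda>w. expM t d *v w) ` filt deg i.
       X *v v \<in> (\<lambda>w. expM t d *v w) ` filt deg i}"

end

theory Submission
  imports Defs
begin

lemma scaleM_nth[simp]: "scaleM c A $ i $ j = c * A $ i $ j"
  by (simp add: scaleM_def)

lemma mm_nth: "(A ** B) $ i $ j = (\<Sum>k\<in>UNIV. A$i$k * B$k$j)"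
  by (simp add: matrix_matrix_mult_def)

lemma mm_add_r: "((A::'a::semiring_1^'n^'n) + B) ** C = A ** C + B ** C"
  by (simp add: vec_eq_iff matrix_matrix_mult_def sum.distrib distrib_right)
lemma mm_add_l: "(A::'a::semiring_1^'n^'n) ** (B + C) = A ** B + A ** C"
  by (simp add: vec_eq_iff matrix_matrix_mult_def sum.distrib distrib_left)
lemma mm_diff_r: "((A::'a::ring_1^'n^'n) - B) ** C = A ** C - B ** C"
  by (simp add: vec_eq_iff matrix_matrix_mult_def sum_subtractf left_diff_distrib)
lemma mm_diff_l: "(A::'a::ring_1^'n^'n) ** (B - C) = A ** B - A ** C"
  by (simp add: vec_eq_iff matrix_matrix_mult_def sum_subtractf right_diff_distrib)
lemma mm_neg_r: "(- (A::'a::ring_1^'n^'n)) ** C = - (A ** C)"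
  by (simp add: vec_eq_iff matrix_matrix_mult_def sum_negf)
lemma mm_neg_l: "(A::'a::ring_1^'n^'n) ** (- C) = - (A ** C)"
  by (simp add: vec_eq_iff matrix_matrix_mult_def sum_negf)
lemma mm_scale_r: "scaleM c (A::'a::comm_ring_1^'n^'n) ** C = scaleM c (A ** C)"
  by (simp add: vec_eq_iff matrix_matrix_mult_def sum_distrib_left mult.assoc)
lemma mm_scale_l: "(A::'a::comm_ring_1^'n^'n) ** scaleM c C = scaleM c (A ** C)"
  by (simp add: vec_eq_iff matrix_matrix_mult_def sum_distrib_left mult.left_commute)
lemma mm_sum_r: "(\<Sum>x\<in>S. (f x::'a::semiring_1^'n^'n)) ** (C::'a^'n^'n) = (\<Sum>x\<in>S. f x ** C)"
  by (induction S rule: infinite_finite_induct) (simp_all add: mm_add_r)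
lemma mm_sum_l: "(C::'a::semiring_1^'n^'n) ** (\<Sum>x\<in>S. (f x::'a^'n^'n)) = (\<Sum>x\<in>S. C ** f x)"
  by (induction S rule: infinite_finite_induct) (simp_all add: mm_add_l)

lemma scaleM_add: "scaleM c (A + B) = scaleM c A + scaleM (c::'a::comm_ring_1) B"
  by (simp add: vec_eq_iff distrib_left)
lemma scaleM_diff: "scaleM c (A - B) = scaleM c A - scaleM (c::'a::comm_ring_1) B"
  by (simp add: vec_eq_iff right_diff_distrib)
lemma scaleM_neg: "scaleM c (- A) = - scaleM (c::'a::comm_ring_1) A"
  by (simp add: vec_eq_iff)
lemma scaleM_add_left: "scaleM (a + b) A = scaleM a A + scaleM (b::'a::comm_ring_1) A"
  by (simp add: vec_eq_iff distrib_right)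
lemma scaleM_diff_left: "scaleM (a - b) A = scaleM a A - scaleM (b::'a::comm_ring_1) A"
  by (simp add: vec_eq_iff left_diff_distrib)
lemma scaleM_scaleM[simp]: "scaleM a (scaleM b A) = scaleM (a * b) (A::'a::comm_ring_1^'n^'n)"
  by (simp add: vec_eq_iff mult.assoc)
lemma scaleM_one[simp]: "scaleM 1 (A::'a::comm_ring_1^'n^'n) = A"
  by (simp add: vec_eq_iff)
lemma scaleM_zero[simp]: "scaleM 0 (A::'a::comm_ring_1^'n^'n) = 0"
  by (simp add: vec_eq_iff)
lemma scaleM_zero_r[simp]: "scaleM c (0::'a::comm_ring_1^'n^'n) = 0"
  by (simp add: vec_eq_iff)
lemma scaleM_minus_one: "scaleM (-1) (A::'a::comm_ring_1^'n^'n) = - A"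
  by (simp add: vec_eq_iff)
lemma scaleM_sum: "scaleM c (\<Sum>x\<in>S. f x) = (\<Sum>x\<in>S. scaleM (c::'a::comm_ring_1) (f x))"
  by (induction S rule: infinite_finite_induct) (simp_all add: scaleM_add)
lemma scaleM_sum_left: "scaleM (\<Sum>x\<in>S. f x) A = (\<Sum>x\<in>S. scaleM (f x) (A::'a::comm_ring_1^'n^'n))"
  by (induction S rule: infinite_finite_induct) (simp_all add: scaleM_add_left)
lemma scaleM_eq_0_iff: "scaleM c (A::'a::field^'n^'n) = 0 \<longleftrightarrow> c = 0 \<or> A = 0"
  by (auto simp: vec_eq_iff)

lemma bracket_add_l: "bracket (A + B) C = bracket A C + bracket (B::'a::ring_1^'n^'n) C"
  by (simp add: bracket_def mm_add_r mm_add_l algebra_simps)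
lemma bracket_add_r: "bracket C (A + B) = bracket C A + bracket C (B::'a::ring_1^'n^'n)"
  by (simp add: bracket_def mm_add_r mm_add_l algebra_simps)
lemma bracket_diff_l: "bracket (A - B) C = bracket A C - bracket (B::'a::ring_1^'n^'n) C"
  by (simp add: bracket_def mm_diff_r mm_diff_l algebra_simps)
lemma bracket_diff_r: "bracket C (A - B) = bracket C A - bracket C (B::'a::ring_1^'n^'n)"
  by (simp add: bracket_def mm_diff_r mm_diff_l algebra_simps)
lemma bracket_neg_l: "bracket (- A) C = - bracket (A::'a::ring_1^'n^'n) C"
  by (simp add: bracket_def mm_neg_r mm_neg_l algebra_simps)
lemma bracket_neg_r: "bracket C (- A) = - bracket C (A::'a::ring_1^'n^'n)"
  by (simp add: bracket_def mm_neg_r mm_neg_l algebra_simps)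
lemma bracket_scale_l: "bracket (scaleM c A) C = scaleM c (bracket (A::'a::comm_ring_1^'n^'n) C)"
  by (simp add: bracket_def mm_scale_r mm_scale_l scaleM_diff)
lemma bracket_scale_r: "bracket C (scaleM c A) = scaleM c (bracket C (A::'a::comm_ring_1^'n^'n))"
  by (simp add: bracket_def mm_scale_r mm_scale_l scaleM_diff)
lemma bracket_zero_l[simp]: "bracket 0 (A::'a::ring_1^'n^'n) = 0"
  by (simp add: bracket_def)
lemma bracket_zero_r[simp]: "bracket A (0::'a::ring_1^'n^'n) = 0"
  by (simp add: bracket_def)
lemma bracket_self[simp]: "bracket A (A::'a::ring_1^'n^'n) = 0"
  by (simp add: bracket_def)
lemma bracket_antisym: "bracket B A = - bracket A (B::'a::ring_1^'n^'n)"
  by (simp add: bracket_def)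
lemma jacobi: "bracket A (bracket B C) = bracket (bracket A B) C + bracket B (bracket A (C::'a::ring_1^'n^'n))"
  by (simp add: bracket_def mm_diff_r mm_diff_l matrix_mul_assoc algebra_simps)
lemma bracket_sum_l: "bracket (\<Sum>x\<in>S. f x) (C::'a::ring_1^'n^'n) = (\<Sum>x\<in>S. bracket (f x) C)"
  by (induction S rule: infinite_finite_induct) (simp_all add: bracket_add_l)


lemma comp_nth[simp]: "comp deg k A $ i $ j = (if deg i = deg j + k then A$i$j else 0)"
  by (simp add: comp_def)

lemma homog_comp: "homog deg k (comp deg k A)"
  by (simp add: homog_def)

lemma comp_of_homog: assumes "homog deg j A" shows "comp deg k A = (if k = j then A else 0)"
  unfolding vec_eq_iff
proof (intro allI)
  fix i l
  have h: "A$i$l \<noteq> 0 \<Longrightarrow> deg i = deg l + j" using assms unfolding homog_def by blast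
  show "comp deg k A $ i $ l = (if k = j then A else 0) $ i $ l"
  proof (cases "A$i$l = 0")
    case False
    then have "deg i = deg l + j" using h by blast
    then show ?thesis by simp
  qed simp
qed

lemma comp_add: "comp deg k (A + B) = comp deg k A + comp deg k (B::'a::ring_1^'n^'n)"
  by (simp add: vec_eq_iff)
lemma comp_diff: "comp deg k (A - B) = comp deg k A - comp deg k (B::'a::ring_1^'n^'n)"
  by (simp add: vec_eq_iff)
lemma comp_neg: "comp deg k (- A) = - comp deg k (A::'a::ring_1^'n^'n)"
  by (simp add: vec_eq_iff)
lemma comp_scale: "comp deg k (scaleM c A) = scaleM c (comp deg k (A::'a::comm_ring_1^'n^'n))"
  by (simp add: vec_eq_iff)
lemma comp_zero[simp]: "comp deg k (0::'a::ring_1^'n^'n) = 0"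
  by (simp add: vec_eq_iff)
lemma comp_sum: "comp deg k (\<Sum>x\<in>S. f x) = (\<Sum>x\<in>S. comp deg k (f x::'a::ring_1^'n^'n))"
  by (induction S rule: infinite_finite_induct) (simp_all add: comp_add)

lemma homog_zero[simp]: "homog deg k 0"
  by (simp add: homog_def)
lemma homog_add: "homog deg k A \<Longrightarrow> homog deg k B \<Longrightarrow> homog deg k (A + (B::'a::ring_1^'n^'n))"
  unfolding homog_def by simp (metis add.left_neutral add.right_neutral)
lemma homog_diff: "homog deg k A \<Longrightarrow> homog deg k B \<Longrightarrow> homog deg k (A - (B::'a::ring_1^'n^'n))"
  unfolding homog_def by simp (metis diff_self diff_zero eq_iff_diff_eq_0)
lemma homog_neg: "homog deg k A \<Longrightarrow> homog deg k (- (A::'a::ring_1^'n^'n))"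
  unfolding homog_def by simp
lemma homog_scale: "homog deg k A \<Longrightarrow> homog deg k (scaleM c (A::'a::comm_ring_1^'n^'n))"
  unfolding homog_def by (metis mult_zero_right scaleM_nth)

lemma homog_mm: assumes "homog deg j A" "homog deg k B"
  shows "homog deg (j + k) (A ** (B::'a::ring_1^'n^'n))"
  unfolding homog_def
proof (intro allI impI)
  fix i l assume "(A ** B) $ i $ l \<noteq> 0"
  then have "(\<Sum>m\<in>UNIV. A$i$m * B$m$l) \<noteq> 0" by (simp add: mm_nth)
  then obtain m where "A$i$m * B$m$l \<noteq> 0" by (rule sum.not_neutral_contains_not_neutral)
  then have "A$i$m \<noteq> 0" "B$m$l \<noteq> 0" by auto
  with assms show "deg i = deg l + (j + k)" unfolding homog_def by force
qed

lemma homog_bracket: "homog deg j A \<Longrightarrow> homog deg k B \<Longrightarrow> homog deg (j + k) (bracket A (B::'a::ring_1^'n^'n))"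
  unfolding bracket_def by (metis add.commute homog_diff homog_mm)

lemma comp_mm_homog_l: assumes "homog deg j A"
  shows "comp deg k (A ** (B::'a::ring_1^'n^'n)) = A ** comp deg (k - j) B"
  unfolding vec_eq_iff
proof (intro allI)
  fix i l
  have p: "(if deg i = deg l + k then A$i$m * B$m$l else 0) = A$i$m * (if deg m = deg l + (k - j) then B$m$l else 0)" for m
  proof (cases "A$i$m = 0")
    case False
    then have "deg i = deg m + j" using assms unfolding homog_def by blast
    then show ?thesis by auto
  qed simp
  have "comp deg k (A ** B) $ i $ l = (\<Sum>m\<in>UNIV. if deg i = deg l + k then A$i$m * B$m$l else 0)"
    by (simp add: mm_nth)
  also have "\<dots> = (\<Sum>m\<in>UNIV. A$i$m * (if deg m = deg l + (k - j) then B$m$l else 0))"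
    using p by simp
  also have "\<dots> = (A ** comp deg (k - j) B) $ i $ l" by (simp add: mm_nth)
  finally show "comp deg k (A ** B) $ i $ l = (A ** comp deg (k - j) B) $ i $ l" .
qed

lemma comp_mm_homog_r: assumes "homog deg j B"
  shows "comp deg k ((A::'a::ring_1^'n^'n) ** B) = comp deg (k - j) A ** B"
  unfolding vec_eq_iff
proof (intro allI)
  fix i l
  have p: "(if deg i = deg l + k then A$i$m * B$m$l else 0) = (if deg i = deg m + (k - j) then A$i$m else 0) * B$m$l" for m
  proof (cases "B$m$l = 0")
    case False
    then have "deg m = deg l + j" using assms unfolding homog_def by blast
    then show ?thesis by auto
  qed simp
  have "comp deg k (A ** B) $ i $ l = (\<Sum>m\<in>UNIV. if deg i = deg l + k then A$i$m * B$m$l else 0)"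
    by (simp add: mm_nth)
  also have "\<dots> = (\<Sum>m\<in>UNIV. (if deg i = deg m + (k - j) then A$i$m else 0) * B$m$l)"
    using p by simp
  also have "\<dots> = (comp deg (k - j) A ** B) $ i $ l" by (simp add: mm_nth)
  finally show "comp deg k (A ** B) $ i $ l = (comp deg (k - j) A ** B) $ i $ l" .
qed

lemma comp_bracket_homog_l: "homog deg j A \<Longrightarrow> comp deg k (bracket A (B::'a::ring_1^'n^'n)) = bracket A (comp deg (k - j) B)"
  by (simp add: bracket_def comp_diff comp_mm_homog_l comp_mm_homog_r)

lemma zero_if_comps: "(\<And>k. comp deg k A = 0) \<Longrightarrow> (A::'a::zero^'n^'n) = 0"
proof -
  assume h: "\<And>k. comp deg k A = 0"
  show ?thesis
    unfolding vec_eq_iff proof (intro allI)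
    fix i j
    have "comp deg (deg i - deg j) A $ i $ j = A$i$j" by simp
    then show "A$i$j = 0$i$j" using h by simp
  qed
qed

lemma homog_big_zero: assumes "homog deg k A" "\<And>i j. \<bar>deg i - deg j\<bar> < \<bar>k\<bar>"
  shows "A = 0"
  unfolding vec_eq_iff
proof (intro allI)
  fix i l
  show "A$i$l = 0$i$l"
  proof (rule ccontr)
    assume "A$i$l \<noteq> 0$i$l"
    then have "deg i = deg l + k" using assms(1) unfolding homog_def by simp
    then show False using assms(2)[of i l] by simp
  qed
qed

lemma comp_mm_sum: assumes "finite S" "\<And>i j. deg i - deg j \<in> S"
  shows "comp deg k (A ** (B::'a::ring_1^'n^'n)) = (\<Sum>j\<in>S. comp deg j A ** comp deg (k - j) B)"
  unfolding vec_eq_iff proof (intro allI)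
  fix i l
  have inner: "(\<Sum>j\<in>S. (if deg i = deg m + j then A$i$m else 0) * (if deg m = deg l + (k - j) then B$m$l else 0))
      = (if deg i = deg l + k then A$i$m * B$m$l else 0)" for m
  proof -
    have "(\<Sum>j\<in>S. (if deg i = deg m + j then A$i$m else 0) * (if deg m = deg l + (k - j) then B$m$l else 0))
      = (\<Sum>j\<in>S. if j = deg i - deg m then (if deg i = deg l + k then A$i$m * B$m$l else 0) else 0)"
      by (rule sum.cong) auto
    also have "\<dots> = (if deg i = deg l + k then A$i$m * B$m$l else 0)"
      using assms by (simp add: sum.delta)
    finally show ?thesis .
  qed
  have "(\<Sum>j\<in>S. comp deg j A ** comp deg (k - j) B) $ i $ l
     = (\<Sum>j\<in>S. \<Sum>m\<in>UNIV. (if deg i = deg m + j then A$i$m else 0) * (if deg m = deg l + (k - j) then B$m$l else 0))"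
    by (simp add: mm_nth sum_component)
  also have "\<dots> = (\<Sum>m\<in>UNIV. \<Sum>j\<in>S. (if deg i = deg m + j then A$i$m else 0) * (if deg m = deg l + (k - j) then B$m$l else 0))"
    by (rule sum.swap)
  also have "\<dots> = (\<Sum>m\<in>UNIV. if deg i = deg l + k then A$i$m * B$m$l else 0)"
    by (simp add: inner)
  also have "\<dots> = comp deg k (A ** B) $ i $ l"
    by (simp add: mm_nth)
  finally show "comp deg k (A ** B) $ i $ l = (\<Sum>j\<in>S. comp deg j A ** comp deg (k - j) B) $ i $ l" by simp
qed

lemma comp_mm_sum': assumes "finite S" "\<And>i j. deg i - deg j \<in> S"
  shows "comp deg k (A ** (B::'a::ring_1^'n^'n)) = (\<Sum>j\<in>S. comp deg (k - j) A ** comp deg j B)"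
  unfolding vec_eq_iff proof (intro allI)
  fix i l
  have inner: "(\<Sum>j\<in>S. (if deg i = deg m + (k - j) then A$i$m else 0) * (if deg m = deg l + j then B$m$l else 0))
      = (if deg i = deg l + k then A$i$m * B$m$l else 0)" for m
  proof -
    have "(\<Sum>j\<in>S. (if deg i = deg m + (k - j) then A$i$m else 0) * (if deg m = deg l + j then B$m$l else 0))
      = (\<Sum>j\<in>S. if j = deg m - deg l then (if deg i = deg l + k then A$i$m * B$m$l else 0) else 0)"
      by (rule sum.cong) auto
    also have "\<dots> = (if deg i = deg l + k then A$i$m * B$m$l else 0)"
      using assms by (simp add: sum.delta)
    finally show ?thesis .
  qed
  have "(\<Sum>j\<in>S. comp deg (k - j) A ** comp deg j B) $ i $ l
     = (\<Sum>j\<in>S. \<Sum>m\<in>UNIV. (if deg i = deg m + (k - j) then A$i$m else 0) * (if deg m = deg l + j then B$m$l else 0))"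
    by (simp add: mm_nth sum_component)
  also have "\<dots> = (\<Sum>m\<in>UNIV. \<Sum>j\<in>S. (if deg i = deg m + (k - j) then A$i$m else 0) * (if deg m = deg l + j then B$m$l else 0))"
    by (rule sum.swap)
  also have "\<dots> = (\<Sum>m\<in>UNIV. if deg i = deg l + k then A$i$m * B$m$l else 0)"
    by (simp add: inner)
  also have "\<dots> = comp deg k (A ** B) $ i $ l"
    by (simp add: mm_nth)
  finally show "comp deg k (A ** B) $ i $ l = (\<Sum>j\<in>S. comp deg (k - j) A ** comp deg j B) $ i $ l" by simp
qed

lemma comp_bracket_sum: assumes "finite S" "\<And>i j. deg i - deg j \<in> S"
  shows "comp deg k (bracket A (B::'a::ring_1^'n^'n)) = (\<Sum>j\<in>S. bracket (comp deg j A) (comp deg (k - j) B))"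
proof -
  have 1: "comp deg k (A ** B) = (\<Sum>j\<in>S. comp deg j A ** comp deg (k - j) B)" by (rule comp_mm_sum[OF assms])
  have 2: "comp deg k (B ** A) = (\<Sum>j\<in>S. comp deg (k - j) B ** comp deg j A)" by (rule comp_mm_sum'[OF assms])
  show ?thesis unfolding bracket_def comp_diff 1 2 sum_subtractf[symmetric] ..
qed


lemma msub_zero: "msubspace S \<Longrightarrow> 0 \<in> S" by (simp add: msubspace_def)
lemma msub_add: "msubspace S \<Longrightarrow> A \<in> S \<Longrightarrow> B \<in> S \<Longrightarrow> A + B \<in> S" by (simp add: msubspace_def)
lemma msub_scale: "msubspace S \<Longrightarrow> A \<in> S \<Longrightarrow> scaleM c A \<in> S" by (simp add: msubspace_def)
lemma msub_neg: "msubspace S \<Longrightarrow> A \<in> S \<Longrightarrow> - (A::'a::comm_ring_1^'n^'n) \<in> S"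
  by (metis msub_scale scaleM_minus_one)
lemma msub_diff: "msubspace S \<Longrightarrow> A \<in> S \<Longrightarrow> B \<in> S \<Longrightarrow> A - (B::'a::comm_ring_1^'n^'n) \<in> S"
  by (metis msub_add msub_neg diff_conv_add_uminus)
lemma msub_sum: "msubspace S \<Longrightarrow> (\<And>x. x \<in> T \<Longrightarrow> f x \<in> S) \<Longrightarrow> (\<Sum>x\<in>T. f x) \<in> S"
  by (induction T rule: infinite_finite_induct) (auto simp: msub_zero msub_add)

definition rbn :: "'a::ring_1^'n^'n \<Rightarrow> nat \<Rightarrow> 'a^'n^'n \<Rightarrow> 'a^'n^'n" where
  "rbn d m X = ((\<lambda>Z. bracket Z d) ^^ m) X"
definition adp :: "'a::ring_1^'n^'n \<Rightarrow> nat \<Rightarrow> 'a^'n^'n \<Rightarrow> 'a^'n^'n" where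
  "adp d m X = ((\<lambda>Z. bracket d Z) ^^ m) X"

lemma rbn_0[simp]: "rbn d 0 X = X" by (simp add: rbn_def)
lemma rbn_Suc: "rbn d (Suc m) X = bracket (rbn d m X) d" by (simp add: rbn_def)
lemma rbn_Suc': "rbn d (Suc m) X = rbn d m (bracket X d)" by (simp add: rbn_def funpow_Suc_right del: funpow.simps)
lemma adp_0[simp]: "adp d 0 X = X" by (simp add: adp_def)
lemma adp_Suc: "adp d (Suc m) X = bracket d (adp d m X)" by (simp add: adp_def)
lemma adp_Suc': "adp d (Suc m) X = adp d m (bracket d X)" by (simp add: adp_def funpow_Suc_right del: funpow.simps)
lemma adp_add: "adp d m (A + B) = adp d m A + adp d m (B::'a::ring_1^'n^'n)"
  by (induction m) (simp_all add: adp_Suc bracket_add_r)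
lemma adp_diff: "adp d m (A - B) = adp d m A - adp d m (B::'a::ring_1^'n^'n)"
  by (induction m) (simp_all add: adp_Suc bracket_diff_r)
lemma adp_scale: "adp d m (scaleM c A) = scaleM c (adp d m (A::'a::comm_ring_1^'n^'n))"
  by (induction m) (simp_all add: adp_Suc bracket_scale_r)
lemma adp_zero[simp]: "adp d m (0::'a::ring_1^'n^'n) = 0"
  by (induction m) (simp_all add: adp_Suc)
lemma adp_sum: "adp d m (\<Sum>x\<in>S. f x) = (\<Sum>x\<in>S. adp d m (f x::'a::ring_1^'n^'n))"
  by (induction S rule: infinite_finite_induct) (simp_all add: adp_add)
lemma adp_add_nat: "adp d (m + k) X = adp d m (adp d k X)"
  by (simp add: adp_def funpow_add)
lemma rbn_add: "rbn d m (A + B) = rbn d m A + rbn d m (B::'a::ring_1^'n^'n)"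
  by (induction m) (simp_all add: rbn_Suc bracket_add_l)
lemma rbn_diff: "rbn d m (A - B) = rbn d m A - rbn d m (B::'a::ring_1^'n^'n)"
  by (induction m) (simp_all add: rbn_Suc bracket_diff_l)
lemma rbn_scale: "rbn d m (scaleM c A) = scaleM c (rbn d m (A::'a::comm_ring_1^'n^'n))"
  by (induction m) (simp_all add: rbn_Suc bracket_scale_l)
lemma rbn_zero[simp]: "rbn d m (0::'a::ring_1^'n^'n) = 0"
  by (induction m) (simp_all add: rbn_Suc)
lemma rbn_adp: "rbn d m X = scaleM ((-1)^m) (adp d m (X::'a::comm_ring_1^'n^'n))"
proof (induction m)
  case (Suc m)
  show ?case by (simp add: rbn_Suc adp_Suc Suc bracket_scale_l bracket_antisym[of d] scaleM_neg[symmetric])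
    (simp add: vec_eq_iff)
qed simp

definition Nc :: "('n \<Rightarrow> int) \<Rightarrow> ('a::ring_1^'n^'n) set \<Rightarrow> 'a^'n^'n \<Rightarrow> nat \<Rightarrow> ('a^'n^'n) set" where
  "Nc deg g d m = {X \<in> prol deg g d m. rbn d m X = 0}"

locale setting =
  fixes deg :: "'n::finite \<Rightarrow> int" and g :: "('a::field_char_0^'n^'n) set" and d :: "'a^'n^'n"
  assumes lie: "lie_subalgebra g" and dg: "d \<in> g" and dh: "homog deg (-1) d" and dnz: "d \<noteq> 0"
begin

lemma g_sub: "msubspace g" using lie by (simp add: lie_subalgebra_def)
lemma g_br: "A \<in> g \<Longrightarrow> B \<in> g \<Longrightarrow> bracket A B \<in> g" using lie by (simp add: lie_subalgebra_def)

lemma line_sub: "msubspace (line d)"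
  unfolding msubspace_def line_def
  by (auto simp: scaleM_add_left[symmetric]) (metis scaleM_zero)

lemma line_mem[simp]: "scaleM c d \<in> line d" by (auto simp: line_def)
lemma line_zero[simp]: "0 \<in> line d" by (metis line_mem scaleM_zero)
lemma line_d[simp]: "d \<in> line d" by (metis line_mem scaleM_one)
lemma line_g: "X \<in> line d \<Longrightarrow> X \<in> g" by (auto simp: line_def intro: msub_scale[OF g_sub dg])
lemma line_homog: "X \<in> line d \<Longrightarrow> homog deg (-1) X" by (auto simp: line_def intro: homog_scale[OF dh])
lemma line_br: "X \<in> line d \<Longrightarrow> bracket d X = 0" by (auto simp: line_def bracket_scale_r)
lemma line_br': "X \<in> line d \<Longrightarrow> bracket X d = 0" by (auto simp: line_def bracket_scale_l)

lemma prol_props: "msubspace (prol deg g d m) \<and> (\<forall>X\<in>prol deg g d m. X \<in> g \<and> homog deg (int m - 1) X)"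
proof (induction m)
  case 0
  then show ?case using line_sub line_g line_homog by simp
next
  case (Suc m)
  then have sub: "msubspace (prol deg g d m)" by blast
  have "msubspace (prol deg g d (Suc m))"
    unfolding msubspace_def
    using sub msub_zero[OF g_sub] msub_add[OF g_sub] msub_scale[OF g_sub]
    by (auto simp: bracket_add_l bracket_scale_l msub_zero msub_add msub_scale homog_add homog_scale)
  then show ?case by auto
qed

lemma prol_sub: "msubspace (prol deg g d m)" using prol_props by blast
lemma prol_g: "X \<in> prol deg g d m \<Longrightarrow> X \<in> g" using prol_props by blast
lemma prol_homog: "X \<in> prol deg g d m \<Longrightarrow> homog deg (int m - 1) X" using prol_props by blast

lemma prol_Suc_iff: "X \<in> prol deg g d (Suc m) \<longleftrightarrow> X \<in> g \<and> homog deg (int m) X \<and> bracket X d \<in> prol deg g d m"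
proof
  assume "X \<in> g \<and> homog deg (int m) X \<and> bracket X d \<in> prol deg g d m"
  then show "X \<in> prol deg g d (Suc m)"
    by (auto simp: line_def bracket_scale_r intro: msub_scale[OF prol_sub])
qed auto

lemma prol_iff: "X \<in> prol deg g d m \<longleftrightarrow> X \<in> g \<and> homog deg (int m - 1) X \<and> rbn d m X \<in> line d"
proof (induction m arbitrary: X)
  case 0
  then show ?case using line_g line_homog by auto
next
  case (Suc m)
  have "X \<in> g \<Longrightarrow> bracket X d \<in> g" using g_br dg by blast
  moreover have "homog deg (int m) X \<Longrightarrow> homog deg (int m - 1) (bracket X d)"
    using homog_bracket[OF _ dh] by fastforce
  ultimately show ?case unfolding prol_Suc_iff Suc rbn_Suc' by auto
qed

lemma Nc_0: "Nc deg g d 0 = {0}"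
  by (auto simp: Nc_def intro: msub_zero[OF prol_sub])

lemma Nc_Suc_iff: "X \<in> Nc deg g d (Suc m) \<longleftrightarrow> X \<in> g \<and> homog deg (int m) X \<and> bracket X d \<in> Nc deg g d m"
  unfolding Nc_def mem_Collect_eq prol_Suc_iff rbn_Suc' by blast

lemma Nc_sub: "msubspace (Nc deg g d m)"
  using prol_sub[of m] unfolding msubspace_def Nc_def by (auto simp: rbn_add rbn_scale)

lemma Nc_prol: "X \<in> Nc deg g d m \<Longrightarrow> X \<in> prol deg g d m" by (simp add: Nc_def)

lemma bracket_Nc: "A \<in> prol deg g d a \<Longrightarrow> B \<in> Nc deg g d b \<Longrightarrow> bracket A B \<in> Nc deg g d (a + b - 1)"
proof (induction "a + b" arbitrary: a b A B rule: less_induct)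
  case less
  show ?case
  proof (cases b)
    case 0
    then show ?thesis using less.prems Nc_0 msub_zero[OF Nc_sub] by auto
  next
    case (Suc b')
    note b = Suc
    show ?thesis
    proof (cases a)
      case 0
      then obtain c where A: "A = scaleM c d" using less.prems by (auto simp: line_def)
      have "bracket B d \<in> Nc deg g d b'" using less.prems b Nc_Suc_iff by blast
      then have "scaleM (-c) (bracket B d) \<in> Nc deg g d b'" by (rule msub_scale[OF Nc_sub])
      moreover have "bracket A B = scaleM (-c) (bracket B d)"
        by (simp add: A bracket_scale_l bracket_antisym[of d B] scaleM_neg) (simp add: vec_eq_iff)
      ultimately show ?thesis using 0 b by simp
    next
      case (Suc a')
      have Ag: "A \<in> g" "homog deg (int a') A" "bracket A d \<in> prol deg g d a'"
        using less.prems(1) Suc prol_Suc_iff by auto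
      have Bg: "B \<in> g" "homog deg (int b') B" "bracket B d \<in> Nc deg g d b'"
        using less.prems(2) b Nc_Suc_iff by auto
      have 1: "bracket (bracket A d) B \<in> Nc deg g d (a' + b')"
        using less.hyps[of a' b] Ag(3) less.prems(2) Suc \<open>b = Suc b'\<close> by simp
      have 2: "bracket A (bracket B d) \<in> Nc deg g d (a' + b')"
        using less.hyps[of a b'] less.prems(1) Bg(3) b Suc by simp
      have j: "bracket (bracket A B) d = bracket (bracket A d) B + bracket A (bracket B d)"
        using jacobi[of A B d] jacobi[of d A B] by (simp add: bracket_antisym[of _ d] bracket_antisym[of B A] bracket_neg_l bracket_neg_r bracket_add_r)
      have "bracket (bracket A B) d \<in> Nc deg g d (a' + b')"
        unfolding j using 1 2 Suc b by (auto intro: msub_add[OF Nc_sub])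
      moreover have "bracket A B \<in> g" using Ag Bg g_br by blast
      moreover have "homog deg (int (a' + b')) (bracket A B)" using homog_bracket[OF Ag(2) Bg(2)] by simp
      ultimately show ?thesis using Nc_Suc_iff Suc b by simp
    qed
  qed
qed

end

lemma msub_single0: "msubspace {0::'a::comm_ring_1^'n^'n}"
  by (simp add: msubspace_def)

definition Nglob :: "('n \<Rightarrow> int) \<Rightarrow> ('a::ring_1^'n^'n) set \<Rightarrow> 'a^'n^'n \<Rightarrow> ('a^'n^'n) set" where
  "Nglob deg g d = {X. (\<forall>k<0. comp deg k X = 0) \<and> (\<forall>k\<ge>0. comp deg k X \<in> Nc deg g d (nat (k + 1)))}"

lemma deg_bound: fixes deg :: "'n::finite \<Rightarrow> int"
  obtains R :: nat where "\<And>i j. \<bar>deg i - deg j\<bar> \<le> int R"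
proof -
  let ?F = "(\<lambda>p. \<bar>deg (fst p) - deg (snd p)\<bar>) ` (UNIV :: ('n \<times> 'n) set)"
  have fin: "finite ?F" by simp
  have "\<bar>deg i - deg j\<bar> \<le> int (nat (Max ?F))" for i j
  proof -
    have "\<bar>deg i - deg j\<bar> \<in> ?F" by (rule image_eqI[of _ _ "(i, j)"]) auto
    then have "\<bar>deg i - deg j\<bar> \<le> Max ?F" using fin by (rule Max_ge[rotated])
    then show ?thesis by linarith
  qed
  then show ?thesis using that by blast
qed

context setting
begin

lemma comp_rb: "comp deg j (bracket W d) = bracket (comp deg (j + 1) W) d"
proof -
  have "comp deg j (bracket W d) = comp deg j (- bracket d W)" by (simp add: bracket_antisym[of W])
  also have "\<dots> = - bracket d (comp deg (j + 1) W)"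
    by (simp add: comp_neg comp_bracket_homog_l[OF dh])
  also have "\<dots> = bracket (comp deg (j + 1) W) d" by (simp add: bracket_antisym[of d])
  finally show ?thesis .
qed

lemma comp_rbn: "comp deg j (rbn d m Z) = rbn d m (comp deg (j + int m) Z)"
proof (induction m arbitrary: j)
  case (Suc m)
  show ?case by (simp add: rbn_Suc comp_rb Suc ac_simps)
qed simp

lemma zero_prol: "0 \<in> prol deg g d m" by (rule msub_zero[OF prol_sub])

lemma umax_low: "X \<in> umax deg g d \<Longrightarrow> k < -1 \<Longrightarrow> comp deg k X = 0"
  by (simp add: umax_def)
lemma umax_comp: "X \<in> umax deg g d \<Longrightarrow> k \<ge> -1 \<Longrightarrow> comp deg k X \<in> prol deg g d (nat (k + 1))"
  by (simp add: umax_def uk_def)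

lemma umax_sub: "msubspace (umax deg g d)"
  unfolding msubspace_def umax_def uk_def
  by (auto simp: comp_add comp_scale zero_prol intro: msub_add[OF prol_sub] msub_scale[OF prol_sub])

lemma homog_umax: assumes "homog deg j A" "j \<ge> -1" "A \<in> prol deg g d (nat (j + 1))"
  shows "A \<in> umax deg g d"
  unfolding umax_def uk_def using assms by (auto simp: comp_of_homog[OF assms(1)] zero_prol)

lemma d_umax: "d \<in> umax deg g d"
  using homog_umax[OF dh] by simp

lemma Nglob_umax: "Nglob deg g d \<subseteq> umax deg g d"
  unfolding Nglob_def umax_def uk_def
proof (safe)
  fix X k assume "\<forall>k<0. comp deg k X = 0" "\<forall>k\<ge>0. comp deg k X \<in> Nc deg g d (nat (k + 1))" "(-1::int) \<le> k"
  then show "comp deg k X \<in> prol deg g d (nat (k + 1))"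
    by (cases "k = -1") (auto intro: Nc_prol zero_prol)
qed auto

lemma Nglob_sub: "msubspace (Nglob deg g d)"
  unfolding msubspace_def Nglob_def
  by (auto simp: comp_add comp_scale intro: msub_zero[OF Nc_sub] msub_add[OF Nc_sub] msub_scale[OF Nc_sub])

lemma Nglob_ideal: assumes A: "A \<in> umax deg g d" and B: "B \<in> Nglob deg g d"
  shows "bracket A B \<in> Nglob deg g d"
proof -
  obtain R :: nat where R: "\<And>i j. \<bar>deg i - deg j\<bar> \<le> int R" using deg_bound by blast
  let ?S = "{- int R .. int R}"
  have S2: "deg i - deg j \<in> ?S" for i j using R[of i j] by (simp add: abs_le_iff)
  have S: "finite ?S" "\<And>i j. deg i - deg j \<in> ?S" using S2 by auto
  define T where "T k = (if k \<ge> 0 then Nc deg g d (nat (k + 1)) else {0})" for k :: int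
  have Tsub: "msubspace (T k)" for k by (simp add: T_def Nc_sub msub_single0)
  have tm: "bracket (comp deg j A) (comp deg (k - j) B) \<in> T k" for j k
  proof (cases "j < -1 \<or> k - j < 0")
    case True
    then have "comp deg j A = 0 \<or> comp deg (k - j) B = 0"
      using umax_low[OF A] B by (auto simp: Nglob_def)
    then show ?thesis using msub_zero[OF Tsub] by auto
  next
    case False
    then have 1: "comp deg j A \<in> prol deg g d (nat (j + 1))" using umax_comp[OF A] by simp
    have 2: "comp deg (k - j) B \<in> Nc deg g d (nat (k - j + 1))" using B False by (auto simp: Nglob_def)
    have idx: "nat (j + 1) + nat (k - j + 1) - 1 = nat (k + 1)" using False by auto
    have 3: "bracket (comp deg j A) (comp deg (k - j) B) \<in> Nc deg g d (nat (k + 1))"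
      using bracket_Nc[OF 1 2] idx by simp
    show ?thesis
    proof (cases "k \<ge> 0")
      case True then show ?thesis using 3 by (simp add: T_def)
    next
      case f: False
      then have "k = -1" using False by auto
      then show ?thesis using 3 by (simp add: T_def Nc_0)
    qed
  qed
  have c: "comp deg k (bracket A B) \<in> T k" for k
    unfolding comp_bracket_sum[OF S] by (rule msub_sum[OF Tsub]) (rule tm)
  have "comp deg k (bracket A B) = 0" if "k < 0" for k using c[of k] that by (simp add: T_def)
  moreover have "comp deg k (bracket A B) \<in> Nc deg g d (nat (k + 1))" if "k \<ge> 0" for k using c[of k] that by (simp add: T_def)
  ultimately show ?thesis unfolding Nglob_def by blast
qed

lemma Nglob_lie_ideal: "lie_ideal (umax deg g d) (Nglob deg g d)"
  unfolding lie_ideal_def using Nglob_sub Nglob_umax Nglob_ideal by blast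

lemma nmax_eq: "nmax deg g d = Nglob deg g d"
proof
  show "Nglob deg g d \<subseteq> nmax deg g d"
    unfolding nmax_def using Nglob_lie_ideal Nglob_umax by (auto simp: Nglob_def)
next
  show "nmax deg g d \<subseteq> Nglob deg g d"
  proof
    fix X assume "X \<in> nmax deg g d"
    then obtain I where I: "lie_ideal (umax deg g d) I" "I \<subseteq> {X \<in> umax deg g d. \<forall>k<0. comp deg k X = 0}" "X \<in> I"
      unfolding nmax_def by blast
    have Isub: "msubspace I" and IL: "\<And>A B. A \<in> umax deg g d \<Longrightarrow> B \<in> I \<Longrightarrow> bracket A B \<in> I"
      using I(1) unfolding lie_ideal_def by auto
    have rI: "rbn d m X \<in> I" for m
    proof (induction m)
      case (Suc m)
      have "- bracket d (rbn d m X) \<in> I" using IL[OF d_umax Suc] by (rule msub_neg[OF Isub])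
      then show ?case by (simp add: rbn_Suc bracket_antisym[of d])
    qed (simp add: I(3))
    have XU: "X \<in> umax deg g d" and neg: "\<And>k. k < 0 \<Longrightarrow> comp deg k X = 0" using I by auto
    have "comp deg k X \<in> Nc deg g d (nat (k + 1))" if k: "k \<ge> 0" for k
    proof -
      have "rbn d (nat (k + 1)) X \<in> {X \<in> umax deg g d. \<forall>k<0. comp deg k X = 0}" using I(2) rI by blast
      then have "comp deg (-1) (rbn d (nat (k + 1)) X) = 0" by simp
      then have "rbn d (nat (k + 1)) (comp deg k X) = 0" using k by (simp add: comp_rbn)
      moreover have "comp deg k X \<in> prol deg g d (nat (k + 1))" using umax_comp[OF XU] k by simp
      ultimately show ?thesis by (simp add: Nc_def)
    qed
    then show "X \<in> Nglob deg g d" using neg by (simp add: Nglob_def)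
  qed
qed

end

locale setting2 = setting deg g d
  for deg :: "'n::finite \<Rightarrow> int" and g :: "('a::field_char_0^'n^'n) set" and d :: "'a^'n^'n" +
  fixes H Y :: "'a^'n^'n"
  assumes Hg: "H \<in> g" and Hh: "homog deg 0 H" and Yg: "Y \<in> g" and Yh: "homog deg 1 Y"
    and rHd: "bracket H d = scaleM 2 d" and rHY: "bracket H Y = scaleM (-2) Y" and rdY: "bracket d Y = H"
begin

lemma L1: "bracket H (adp d n Z) = adp d n (bracket H Z) + scaleM (2 * of_nat n) (adp d n Z)"
proof (induction n)
  case 0 then show ?case by simp
next
  case (Suc n)
  have "bracket H (adp d (Suc n) Z) = bracket (bracket H d) (adp d n Z) + bracket d (bracket H (adp d n Z))"
    unfolding adp_Suc by (rule jacobi)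
  also have "\<dots> = scaleM 2 (adp d (Suc n) Z) + adp d (Suc n) (bracket H Z) + scaleM (2 * of_nat n) (adp d (Suc n) Z)"
    by (simp add: Suc rHd bracket_scale_l bracket_scale_r bracket_add_r adp_Suc)
  also have "\<dots> = adp d (Suc n) (bracket H Z) + scaleM (2 * of_nat (Suc n)) (adp d (Suc n) Z)"
    by (simp add: vec_eq_iff algebra_simps)
  finally show ?case .
qed

lemma Yd: "bracket Y d = - H" using rdY bracket_antisym[of Y d] by simp

lemma L2: "bracket Y (adp d (Suc n) Z) = adp d (Suc n) (bracket Y Z) - scaleM (of_nat (n+1)) (adp d n (bracket H Z))
   - scaleM (of_nat ((n+1)*n)) (adp d n Z)"
proof (induction n)
  case 0
  show ?case by (simp add: adp_Suc jacobi[of Y d Z] Yd bracket_neg_l)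
next
  case (Suc n)
  let ?W = "adp d (Suc n) Z"
  have "bracket Y (adp d (Suc (Suc n)) Z) = - bracket H ?W + bracket d (bracket Y ?W)"
    by (simp add: adp_Suc[of d "Suc n"] jacobi[of Y d] Yd bracket_neg_l)
  also have "\<dots> = - (adp d (Suc n) (bracket H Z) + scaleM (2 * of_nat (Suc n)) ?W)
       + (adp d (Suc (Suc n)) (bracket Y Z) - scaleM (of_nat (n+1)) (adp d (Suc n) (bracket H Z))
         - scaleM (of_nat ((n+1)*n)) ?W)"
    by (simp only: L1 Suc bracket_diff_r bracket_scale_r adp_Suc[symmetric])
  also have "\<dots> = adp d (Suc (Suc n)) (bracket Y Z) - scaleM (of_nat (Suc n + 1)) (adp d (Suc n) (bracket H Z))
   - scaleM (of_nat ((Suc n + 1) * Suc n)) ?W"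
    by (simp add: vec_eq_iff algebra_simps)
  finally show ?case .
qed

lemma sl2_step: assumes N: "N \<ge> 3" and Zh: "homog deg (int N - 1) Z" and Ze: "adp d N Z = scaleM c d"
  shows "\<exists>Z'. homog deg (int (Suc N) - 1) Z' \<and> adp d (Suc N) Z' = scaleM c d"
proof -
  have z: "adp d (Suc N) Z = 0" by (simp add: adp_Suc Ze bracket_scale_r)
  have h: "adp d N (bracket H Z) = scaleM (2 * c - 2 * of_nat N * c) d"
  proof -
    have "bracket H (adp d N Z) = adp d N (bracket H Z) + scaleM (2 * of_nat N) (adp d N Z)" by (rule L1)
    then have "scaleM (c * 2) d = adp d N (bracket H Z) + scaleM (2 * of_nat N * c) d"
      by (simp add: Ze bracket_scale_r rHd)
    then show ?thesis by (simp add: vec_eq_iff algebra_simps)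
  qed
  have "0 = adp d (Suc N) (bracket Y Z) - scaleM (of_nat (N+1)) (adp d N (bracket H Z)) - scaleM (of_nat ((N+1)*N)) (adp d N Z)"
    using L2[of N Z] z by simp
  then have "adp d (Suc N) (bracket Y Z) = scaleM (of_nat (N+1)) (adp d N (bracket H Z)) + scaleM (of_nat ((N+1)*N)) (adp d N Z)"
    by (simp add: diff_diff_eq eq_diff_eq)
  then have y: "adp d (Suc N) (bracket Y Z) = scaleM ((of_nat N + 1) * (2 - of_nat N) * c) d"
    unfolding h Ze by (simp add: vec_eq_iff algebra_simps)
  define k :: 'a where "k = (of_nat N + 1) * (2 - of_nat N)"
  have "(2::'a) - of_nat N \<noteq> 0"
  proof
    assume "(2::'a) - of_nat N = 0" then have "(of_nat N :: 'a) = of_nat 2" by simp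
    then have "N = 2" using of_nat_eq_iff by blast
    then show False using N by simp
  qed
  moreover have "(of_nat N + 1 :: 'a) \<noteq> 0"
  proof -
    have "(of_nat (Suc N) :: 'a) \<noteq> 0" by (rule of_nat_neq_0)
    then show ?thesis by (simp add: add.commute)
  qed
  ultimately have k: "k \<noteq> 0" by (simp add: k_def)
  let ?Z = "scaleM (1 / k) (bracket Y Z)"
  have "adp d (Suc N) ?Z = scaleM c d" using y k by (simp add: adp_scale k_def[symmetric])
  moreover have "homog deg (int (Suc N) - 1) ?Z"
    using homog_bracket[OF Yh Zh] by (auto intro: homog_scale)
  ultimately show ?thesis by blast
qed

lemma sl2_key: assumes n: "n \<ge> 3" and Zh: "homog deg (int n - 1) Z" and Ze: "adp d n Z = scaleM c d"
  shows "c = 0"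
proof -
  have it: "\<exists>Z'. homog deg (int (n + p) - 1) Z' \<and> adp d (n + p) Z' = scaleM c d" for p
  proof (induction p)
    case 0 then show ?case using Zh Ze by auto
  next
    case (Suc p)
    then obtain Z' where "homog deg (int (n + p) - 1) Z'" "adp d (n + p) Z' = scaleM c d" by blast
    then show ?case using sl2_step[of "n + p" Z' c] n by simp
  qed
  obtain R :: nat where R: "\<And>i j. \<bar>deg i - deg j\<bar> \<le> int R" using deg_bound by blast
  obtain Z' where Z': "homog deg (int (n + (R + 2)) - 1) Z'" "adp d (n + (R + 2)) Z' = scaleM c d" using it by blast
  have "Z' = 0"
  proof (rule homog_big_zero[OF Z'(1)])
    fix i j show "\<bar>deg i - deg j\<bar> < \<bar>int (n + (R + 2)) - 1\<bar>" using R[of i j] by simp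
  qed
  then have "scaleM c d = 0" using Z'(2) by simp
  then show ?thesis using dnz by (simp add: scaleM_eq_0_iff)
qed

end

context setting2
begin

definition sv :: "'a \<Rightarrow> 'a \<Rightarrow> 'a \<Rightarrow> 'a^'n^'n" where
  "sv a b c = scaleM a d + scaleM b H + scaleM c Y"

lemma sv_diff: "sv a b c - sv a' b' c' = sv (a - a') (b - b') (c - c')"
  by (simp add: sv_def vec_eq_iff algebra_simps)

lemma comp_sv: "comp deg k (sv a b c) = (if k = -1 then scaleM a d else if k = 0 then scaleM b H else if k = 1 then scaleM c Y else 0)"
  by (simp add: sv_def comp_add comp_scale comp_of_homog[OF dh] comp_of_homog[OF Hh] comp_of_homog[OF Yh])

lemma H_ne: "H \<noteq> 0"
proof
  assume "H = 0" then have "scaleM 2 d = 0" using rHd by simp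
  then show False using dnz by (simp add: scaleM_eq_0_iff)
qed

lemma Y_ne: "Y \<noteq> 0" using rdY H_ne by auto

lemma rb_H: "rbn d 1 H = scaleM 2 d" by (simp add: rbn_Suc rHd)
lemma rb_H': "rbn d (Suc 0) H = scaleM 2 d" by (simp add: rbn_Suc rHd)
lemma rb_Y: "rbn d 2 Y = scaleM (-2) d"
  by (simp add: rbn_Suc numeral_2_eq_2 Yd bracket_neg_l rHd) (simp add: vec_eq_iff)

lemma H_prol: "H \<in> prol deg g d 1"
  unfolding prol_iff using Hg Hh rb_H by simp
lemma Y_prol: "Y \<in> prol deg g d 2"
  unfolding prol_iff using Yg Yh rb_Y by simp

lemma H_umax: "H \<in> umax deg g d" using homog_umax[OF Hh] H_prol by simp
lemma Y_umax: "Y \<in> umax deg g d" using homog_umax[OF Yh] Y_prol by simp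

lemma sv_umax: "sv a b c \<in> umax deg g d"
  unfolding sv_def
  by (intro msub_add[OF umax_sub] msub_scale[OF umax_sub] d_umax H_umax Y_umax)

lemma sv_indep: "sv a b c = 0 \<Longrightarrow> a = 0 \<and> b = 0 \<and> c = 0"
proof -
  assume z: "sv a b c = 0"
  have "comp deg (-1) (sv a b c) = 0" "comp deg 0 (sv a b c) = 0" "comp deg 1 (sv a b c) = 0" using z by simp_all
  then have "scaleM a d = 0" "scaleM b H = 0" "scaleM c Y = 0" by (simp_all add: comp_sv)
  then show ?thesis using dnz H_ne Y_ne by (simp add: scaleM_eq_0_iff)
qed

lemma sv_Nglob: "sv a b c \<in> Nglob deg g d \<Longrightarrow> a = 0 \<and> b = 0 \<and> c = 0"
proof -
  assume N: "sv a b c \<in> Nglob deg g d"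
  have "comp deg (-1) (sv a b c) = 0" using N by (simp add: Nglob_def)
  then have a: "a = 0" using dnz by (simp add: comp_sv scaleM_eq_0_iff)
  have NN: "\<forall>k\<ge>0. comp deg k (sv a b c) \<in> Nc deg g d (nat (k + 1))" using N by (simp add: Nglob_def)
  have "comp deg 0 (sv a b c) \<in> Nc deg g d (nat (0 + 1))" using NN[rule_format, of 0] by simp
  then have "comp deg 0 (sv a b c) \<in> Nc deg g d 1" by simp
  then have "rbn d 1 (scaleM b H) = 0" by (simp add: comp_sv Nc_def)
  then have "scaleM (b * 2) d = 0" by (simp add: rbn_scale rb_H rb_H')
  then have b: "b = 0" using dnz by (simp add: scaleM_eq_0_iff)
  have "comp deg 1 (sv a b c) \<in> Nc deg g d (nat (1 + 1))" using NN[rule_format, of 1] by simp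
  moreover have "nat (1 + 1) = (2::nat)" by simp
  ultimately have "comp deg 1 (sv a b c) \<in> Nc deg g d 2" by metis
  then have "rbn d 2 (scaleM c Y) = 0" by (simp add: comp_sv Nc_def)
  then have "scaleM (c * -2) d = 0" by (simp add: rbn_scale rb_Y)
  then have c: "c = 0" using dnz by (simp add: scaleM_eq_0_iff)
  show ?thesis using a b c by simp
qed

lemma adp_rbn: "adp d m X = scaleM ((-1)^m) (rbn d m X)"
  by (simp add: rbn_adp power_mult_distrib[symmetric])

lemma decomp_ex: assumes X: "X \<in> umax deg g d"
  shows "\<exists>a b c. X - sv a b c \<in> Nglob deg g d"
proof -
  obtain a where a: "comp deg (-1) X = scaleM a d" using umax_comp[OF X, of "-1"] by (auto simp: line_def)
  have X0: "comp deg 0 X \<in> prol deg g d 1" using umax_comp[OF X, of 0] by simp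
  then obtain a0 where a0: "rbn d 1 (comp deg 0 X) = scaleM a0 d" unfolding prol_iff by (auto simp: line_def)
  have X1: "comp deg 1 X \<in> prol deg g d 2" using umax_comp[OF X, of 1] by (simp add: nat_add_distrib)
  then obtain a1 where a1: "rbn d 2 (comp deg 1 X) = scaleM a1 d" unfolding prol_iff by (auto simp: line_def)
  define b where "b = a0 / 2"
  define c where "c = - a1 / 2"
  let ?Z = "X - sv a b c"
  have "comp deg k ?Z = 0" if "k < 0" for k
  proof (cases "k = -1")
    case True then show ?thesis by (simp add: comp_diff comp_sv a)
  next
    case False then show ?thesis using that umax_low[OF X, of k] by (simp add: comp_diff comp_sv)
  qed
  moreover have "comp deg k ?Z \<in> Nc deg g d (nat (k + 1))" if k: "k \<ge> 0" for k
  proof -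
    consider "k = 0" | "k = 1" | "k \<ge> 2" using k by linarith
    then show ?thesis
    proof cases
      case 1
      have "comp deg 0 X - scaleM b H \<in> prol deg g d 1"
        by (rule msub_diff[OF prol_sub X0 msub_scale[OF prol_sub H_prol]])
      moreover have "rbn d 1 (comp deg 0 X - scaleM b H) = rbn d 1 (comp deg 0 X) - scaleM b (rbn d 1 H)"
        by (simp only: rbn_diff rbn_scale)
      moreover have "\<dots> = 0" unfolding a0 rb_H by (simp add: b_def vec_eq_iff)
      ultimately show ?thesis using 1 by (simp add: comp_diff comp_sv Nc_def)
    next
      case 2
      have "comp deg 1 X - scaleM c Y \<in> prol deg g d 2"
        by (rule msub_diff[OF prol_sub X1 msub_scale[OF prol_sub Y_prol]])
      moreover have "rbn d 2 (comp deg 1 X - scaleM c Y) = rbn d 2 (comp deg 1 X) - scaleM c (rbn d 2 Y)"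
        by (simp only: rbn_diff rbn_scale)
      moreover have "\<dots> = 0" unfolding a1 rb_Y by (simp add: c_def vec_eq_iff)
      moreover have "nat (1 + 1) = (2::nat)" by simp
      ultimately show ?thesis using 2 by (simp add: comp_diff comp_sv Nc_def)
    next
      case 3
      have Xk: "comp deg k X \<in> prol deg g d (nat (k + 1))" using umax_comp[OF X, of k] k by simp
      then obtain e where e: "rbn d (nat (k + 1)) (comp deg k X) = scaleM e d" unfolding prol_iff by (auto simp: line_def)
      have hk: "homog deg (int (nat (k + 1)) - 1) (comp deg k X)" using k by (simp add: homog_comp)
      have "adp d (nat (k + 1)) (comp deg k X) = scaleM ((-1) ^ nat (k + 1) * e) d" by (simp add: adp_rbn e)
      from sl2_key[OF _ hk this] 3 have "(-1) ^ nat (k + 1) * e = 0" by simp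
      then have "e = 0" by simp
      then have "comp deg k X \<in> Nc deg g d (nat (k + 1))" using Xk e by (simp add: Nc_def)
      then show ?thesis using 3 by (simp add: comp_diff comp_sv)
    qed
  qed
  ultimately show ?thesis unfolding Nglob_def by blast
qed

lemma decomp_unique: assumes "X - sv a b c \<in> Nglob deg g d" "X - sv a' b' c' \<in> Nglob deg g d"
  shows "a = a' \<and> b = b' \<and> c = c'"
proof -
  have "(X - sv a' b' c') - (X - sv a b c) \<in> Nglob deg g d" by (rule msub_diff[OF Nglob_sub assms(2,1)])
  then have "sv (a - a') (b - b') (c - c') \<in> Nglob deg g d" by (simp add: sv_diff[symmetric])
  then have "a - a' = 0 \<and> b - b' = 0 \<and> c - c' = 0" by (rule sv_Nglob)
  then show ?thesis by simp
qed

end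

lemma mpow_0[simp]: "mpow A 0 = mat 1" by (simp add: mpow_def)
lemma mpow_Suc: "mpow A (Suc k) = A ** mpow A k" by (simp add: mpow_def)
lemma mpow_add: "mpow A (p + q) = mpow A p ** mpow (A::'a::semiring_1^'n^'n) q"
  by (induction p) (simp_all add: mpow_Suc matrix_mul_assoc)
lemma mpow_Suc': "mpow A (Suc k) = mpow A k ** (A::'a::semiring_1^'n^'n)"
  using mpow_add[of A k 1] by (simp add: mpow_Suc)

lemma homog_mat1: "homog deg 0 (mat 1)" by (simp add: homog_def mat_def)

lemma cauchy_mm:
  fixes a b :: "nat \<Rightarrow> 'a::comm_ring_1^'n^'n"
  assumes a0: "\<And>p. p \<ge> A \<Longrightarrow> a p = 0" and b0: "\<And>q. q \<ge> B \<Longrightarrow> b q = 0"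
  shows "(\<Sum>p<A. a p) ** (\<Sum>q<B. b q) = (\<Sum>N<A+B. \<Sum>n\<le>N. a (N - n) ** b n)"
proof -
  have "(\<Sum>p<A. a p) ** (\<Sum>q<B. b q) = (\<Sum>q<B. \<Sum>p<A. a p ** b q)"
    by (simp add: mm_sum_r mm_sum_l)
  also have "\<dots> = (\<Sum>(q, p)\<in>{..<B} \<times> {..<A}. a p ** b q)"
    by (rule sum.cartesian_product)
  also have "\<dots> = (\<Sum>(q, p)\<in>{(q, p). q + p < A + B}. a p ** b q)"
  proof (rule sum.mono_neutral_left)
    show "finite {(q, p). q + p < A + B}"
      by (rule finite_subset[of _ "{..<A+B} \<times> {..<A+B}"]) auto
    show "{..<B} \<times> {..<A} \<subseteq> {(q, p). q + p < A + B}" by auto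
    show "\<forall>x\<in>{(q, p). q + p < A + B} - {..<B} \<times> {..<A}. (case x of (q, p) \<Rightarrow> a p ** b q) = 0"
    proof
      fix x assume x: "x \<in> {(q, p). q + p < A + B} - {..<B} \<times> {..<A}"
      obtain q p where qp: "x = (q, p)" by fastforce
      then have "q \<ge> B \<or> p \<ge> A" using x by auto
      then show "(case x of (q, p) \<Rightarrow> a p ** b q) = 0" using qp a0 b0 by auto
    qed
  qed
  also have "\<dots> = (\<Sum>N<A+B. \<Sum>n\<le>N. a (N - n) ** b n)"
    by (rule sum.triangle_reindex)
  finally show ?thesis .
qed

lemma pascal_sum:
  fixes f :: "nat \<Rightarrow> 'a::comm_ring_1^'n^'n"
  shows "(\<Sum>n\<le>Suc N. scaleM (of_nat (Suc N choose n)) (f n))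
       = (\<Sum>n\<le>N. scaleM (of_nat (N choose n)) (f n)) + (\<Sum>n\<le>N. scaleM (of_nat (N choose n)) (f (Suc n)))"
proof -
  have "(\<Sum>n\<le>Suc N. scaleM (of_nat (Suc N choose n)) (f n))
      = scaleM (of_nat (Suc N choose 0)) (f 0) + (\<Sum>n\<le>N. scaleM (of_nat (Suc N choose Suc n)) (f (Suc n)))"
    by (rule sum.atMost_Suc_shift)
  also have "\<dots> = f 0 + (\<Sum>n\<le>N. scaleM (of_nat (N choose Suc n)) (f (Suc n)))
        + (\<Sum>n\<le>N. scaleM (of_nat (N choose n)) (f (Suc n)))"
    by (simp only: binomial_Suc_Suc of_nat_add scaleM_add_left sum.distrib binomial_n_0 of_nat_1 scaleM_one add.assoc add.commute[of "(\<Sum>n\<le>N. scaleM (of_nat (N choose Suc n)) (f (Suc n)))"])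
  also have "f 0 + (\<Sum>n\<le>N. scaleM (of_nat (N choose Suc n)) (f (Suc n))) = (\<Sum>n\<le>Suc N. scaleM (of_nat (N choose n)) (f n))"
    by (subst sum.atMost_Suc_shift) simp
  also have "\<dots> = (\<Sum>n\<le>N. scaleM (of_nat (N choose n)) (f n))"
    by (simp add: binomial_eq_0)
  finally show ?thesis .
qed

context setting
begin

lemma homog_mpow: "homog deg (- int k) (mpow d k)"
proof (induction k)
  case 0 then show ?case using homog_mat1 by simp
next
  case (Suc k)
  show ?case using homog_mm[OF dh Suc] by (simp add: mpow_Suc add.commute)
qed

lemma mpow_path: "(mpow d k)$i$l \<noteq> 0 \<Longrightarrow> \<forall>s\<le>k. deg l - int s \<in> range deg"
proof (induction k arbitrary: i)
  case 0
  then have "i = l" by (simp add: mat_def split: if_splits)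
  then show ?case by auto
next
  case (Suc k)
  then have "(\<Sum>m\<in>UNIV. d$i$m * (mpow d k)$m$l) \<noteq> 0" by (simp add: mpow_Suc mm_nth)
  then obtain m where m: "d$i$m * (mpow d k)$m$l \<noteq> 0" by (rule sum.not_neutral_contains_not_neutral)
  then have dm: "d$i$m \<noteq> 0" and pm: "(mpow d k)$m$l \<noteq> 0" by auto
  have "deg i = deg m - 1" using dh dm unfolding homog_def by force
  moreover have "deg m = deg l - int k" using homog_mpow[of k] pm unfolding homog_def by force
  ultimately have "deg l - int (Suc k) = deg i" by simp
  then have "deg l - int (Suc k) \<in> range deg" by auto
  then show ?case using Suc.IH[OF pm] le_Suc_eq by auto
qed

lemma mpow_nil: assumes "k \<ge> CARD('n)" shows "mpow d k = 0"
proof (rule ccontr)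
  assume "mpow d k \<noteq> 0"
  then obtain i l where il: "(mpow d k)$i$l \<noteq> 0" by (auto simp: vec_eq_iff)
  have sub: "(\<lambda>s. deg l - int s) ` {..k} \<subseteq> range deg" using mpow_path[OF il] by auto
  have "inj_on (\<lambda>s. deg l - int s) {..k}" by (auto simp: inj_on_def)
  then have "card ((\<lambda>s. deg l - int s) ` {..k}) = Suc k" by (simp add: card_image)
  moreover have "card ((\<lambda>s. deg l - int s) ` {..k}) \<le> card (range deg)" by (rule card_mono[OF _ sub]) simp
  moreover have "card (range deg) \<le> CARD('n)" by (rule card_image_le) simp
  ultimately show False using assms by simp
qed

lemma expM_long: assumes "L \<ge> CARD('n)"
  shows "expM t d = (\<Sum>k<L. scaleM (t^k / fact k) (mpow d k))"
  unfolding expM_def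
proof (rule sum.mono_neutral_left)
  show "\<forall>i\<in>{..<L} - {..<CARD('n)}. scaleM (t ^ i / fact i) (mpow d i) = 0" using mpow_nil by auto
qed (use assms in auto)

lemma exp_inv: "expM t d ** expM (-t) d = mat 1"
proof -
  let ?M = "CARD('n)"
  have "expM t d ** expM (-t) d = (\<Sum>p<?M. scaleM (t^p / fact p) (mpow d p)) ** (\<Sum>q<?M. scaleM ((-t)^q / fact q) (mpow d q))"
    by (simp add: expM_def)
  also have "\<dots> = (\<Sum>N<?M+?M. \<Sum>n\<le>N. scaleM (t^(N-n) / fact (N-n)) (mpow d (N-n)) ** scaleM ((-t)^n / fact n) (mpow d n))"
    by (rule cauchy_mm) (simp_all add: mpow_nil)
  also have "\<dots> = (\<Sum>N<?M+?M. scaleM ((t + -t)^N / fact N) (mpow d N))"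
  proof (rule sum.cong[OF refl])
    fix N
    have c: "(-t)^n * t^(N-n) / (fact n * fact (N-n)) = of_nat (N choose n) * (-t)^n * t^(N-n) / fact N" if "n \<le> N" for n
      using that by (simp add: binomial_fact field_simps)
    have "(\<Sum>n\<le>N. scaleM (t^(N-n) / fact (N-n)) (mpow d (N-n)) ** scaleM ((-t)^n / fact n) (mpow d n))
        = (\<Sum>n\<le>N. scaleM (of_nat (N choose n) * (-t)^n * t^(N-n) / fact N) (mpow d N))"
    proof (rule sum.cong[OF refl])
      fix n assume "n \<in> {..N}"
      then have nN: "n \<le> N" by simp
      have "mpow d (N - n) ** mpow d n = mpow d N" using mpow_add[of d "N-n" n] nN by simp
      then show "scaleM (t^(N-n) / fact (N-n)) (mpow d (N-n)) ** scaleM ((-t)^n / fact n) (mpow d n)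
          = scaleM (of_nat (N choose n) * (-t)^n * t^(N-n) / fact N) (mpow d N)"
        by (simp add: mm_scale_l mm_scale_r c[OF nN])
    qed
    also have "\<dots> = scaleM ((\<Sum>n\<le>N. of_nat (N choose n) * (-t)^n * t^(N-n)) / fact N) (mpow d N)"
      by (simp add: scaleM_sum_left[symmetric] sum_divide_distrib)
    also have "\<dots> = scaleM ((t + -t)^N / fact N) (mpow d N)"
    proof -
      have "(\<Sum>n\<le>N. of_nat (N choose n) * (-t)^n * t^(N-n)) = (-t + t)^N" by (rule binomial_ring[symmetric])
      then show ?thesis by simp
    qed
    finally show "(\<Sum>n\<le>N. scaleM (t^(N-n) / fact (N-n)) (mpow d (N-n)) ** scaleM ((-t)^n / fact n) (mpow d n))
        = scaleM ((t + -t)^N / fact N) (mpow d N)" .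
  qed
  also have "\<dots> = (\<Sum>N<?M+?M. if N = 0 then mat 1 else 0)"
    by (rule sum.cong) (auto simp: power_0_left)
  also have "\<dots> = mat 1" by simp
  finally show ?thesis .
qed

end

context setting
begin

definition Rb :: nat where "Rb = (SOME R::nat. \<forall>i j. \<bar>deg i - deg j\<bar> \<le> int R)"
definition Kb :: nat where "Kb = 2 * Rb + 3"

lemma Rb: "\<bar>deg i - deg j\<bar> \<le> int Rb"
proof -
  have "\<exists>R::nat. \<forall>i j. \<bar>deg i - deg j\<bar> \<le> int R" using deg_bound by metis
  then have "\<forall>i j. \<bar>deg i - deg j\<bar> \<le> int Rb" unfolding Rb_def by (rule someI_ex)
  then show ?thesis by blast
qed

lemma comp_adp: "comp deg j (adp d n X) = adp d n (comp deg (j + int n) X)"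
proof (induction n arbitrary: j)
  case (Suc n)
  show ?case by (simp add: adp_Suc comp_bracket_homog_l[OF dh] Suc ac_simps)
qed simp

lemma homog_adp: "homog deg k W \<Longrightarrow> homog deg (k - int n) (adp d n W)"
proof (induction n)
  case (Suc n)
  then show ?case using homog_bracket[OF dh Suc.IH[OF Suc.prems]] by (simp add: adp_Suc algebra_simps)
qed simp

lemma adp_nil: assumes "n \<ge> Kb" shows "adp d n X = 0"
proof (rule zero_if_comps)
  fix j
  show "comp deg j (adp d n X) = 0"
  proof (cases "\<bar>j\<bar> > int Rb")
    case True
    have "homog deg j (adp d n (comp deg (j + int n) X))"
      using homog_adp[OF homog_comp[of deg "j + int n" X], of n] by simp
    moreover have "\<And>i l. \<bar>deg i - deg l\<bar> < \<bar>j\<bar>" using Rb True by (meson le_less_trans)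
    ultimately show ?thesis unfolding comp_adp by (rule homog_big_zero)
  next
    case False
    have "int Rb < \<bar>j + int n\<bar>" using False assms by (simp add: Kb_def)
    then have "\<And>i l. \<bar>deg i - deg l\<bar> < \<bar>j + int n\<bar>" using Rb by (meson le_less_trans)
    then have "comp deg (j + int n) X = 0"
      by (rule homog_big_zero[OF homog_comp])
    then show ?thesis by (simp add: comp_adp)
  qed
qed

lemma mirror: "X ** mpow d N = (\<Sum>n\<le>N. scaleM (of_nat (N choose n)) (scaleM ((-1)^n) (mpow d (N - n) ** adp d n X)))"
proof (induction N)
  case 0 then show ?case by simp
next
  case (Suc N)
  define g where "g n = scaleM ((-1)^n) (mpow d (Suc N - n) ** adp d n X)" for n
  have step: "scaleM ((-1)^n) (mpow d (N - n) ** adp d n X) ** d = g n + g (Suc n)" if "n \<le> N" for n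
  proof -
    have w: "adp d n X ** d = d ** adp d n X - adp d (Suc n) X" by (simp add: adp_Suc bracket_def)
    have m: "mpow d (N - n) ** d = mpow d (Suc N - n)" using that by (simp add: mpow_Suc' Suc_diff_le)
    have "scaleM ((-1)^n) (mpow d (N - n) ** adp d n X) ** d
        = scaleM ((-1)^n) (mpow d (N - n) ** (adp d n X ** d))"
      by (simp add: mm_scale_r matrix_mul_assoc)
    also have "\<dots> = scaleM ((-1)^n) (mpow d (Suc N - n) ** adp d n X) - scaleM ((-1)^n) (mpow d (N - n) ** adp d (Suc n) X)"
      unfolding w by (simp add: mm_diff_l matrix_mul_assoc m scaleM_diff)
    also have "\<dots> = g n + g (Suc n)"
      by (simp add: g_def vec_eq_iff)
    finally show ?thesis .
  qed
  have "X ** mpow d (Suc N) = (X ** mpow d N) ** d" by (simp add: mpow_Suc' matrix_mul_assoc)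
  also have "\<dots> = (\<Sum>n\<le>N. scaleM (of_nat (N choose n)) (scaleM ((-1)^n) (mpow d (N - n) ** adp d n X) ** d))"
    by (simp add: Suc mm_sum_r mm_scale_r)
  also have "\<dots> = (\<Sum>n\<le>N. scaleM (of_nat (N choose n)) (g n) + scaleM (of_nat (N choose n)) (g (Suc n)))"
    by (rule sum.cong) (simp_all add: step scaleM_add)
  also have "\<dots> = (\<Sum>n\<le>Suc N. scaleM (of_nat (Suc N choose n)) (g n))"
    by (simp only: pascal_sum sum.distrib)
  also have "\<dots> = (\<Sum>n\<le>Suc N. scaleM (of_nat (Suc N choose n)) (scaleM ((-1)^n) (mpow d (Suc N - n) ** adp d n X)))"
    by (simp add: g_def)
  finally show ?case .
qed

definition Fm :: "'a \<Rightarrow> 'a^'n^'n \<Rightarrow> 'a^'n^'n" where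
  "Fm t X = (\<Sum>n<Kb. scaleM ((-t)^n / fact n) (adp d n X))"

lemma coef: fixes t :: 'a assumes "n \<le> N"
  shows "(-t)^n * t^(N-n) / (fact n * fact (N-n)) = t^N * (of_nat (N choose n) * (-1)^n) / fact N"
proof -
  have tN: "t^N = t^(N-n) * t^n" using assms by (simp add: power_add[symmetric])
  have m: "(-t)^n = (-1)^n * t^n" by (rule power_minus)
  have b: "(of_nat (N choose n) :: 'a) = fact N / (fact n * fact (N-n))" by (rule binomial_fact[OF assms])
  show ?thesis unfolding b m tN by (simp add: field_simps)
qed

lemma conj: "X ** expM t d = expM t d ** Fm t X"
proof -
  let ?M = "CARD('n)"
  have "expM t d ** Fm t X = (\<Sum>p<?M. scaleM (t^p / fact p) (mpow d p)) ** (\<Sum>q<Kb. scaleM ((-t)^q / fact q) (adp d q X))"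
    by (simp add: expM_def Fm_def)
  also have "\<dots> = (\<Sum>N<?M+Kb. \<Sum>n\<le>N. scaleM (t^(N-n) / fact (N-n)) (mpow d (N-n)) ** scaleM ((-t)^n / fact n) (adp d n X))"
    by (rule cauchy_mm) (simp_all add: mpow_nil adp_nil)
  also have "\<dots> = (\<Sum>N<?M+Kb. scaleM (t^N / fact N) (X ** mpow d N))"
  proof (rule sum.cong[OF refl])
    fix N
    show "(\<Sum>n\<le>N. scaleM (t^(N-n) / fact (N-n)) (mpow d (N-n)) ** scaleM ((-t)^n / fact n) (adp d n X))
        = scaleM (t^N / fact N) (X ** mpow d N)"
      unfolding mirror scaleM_sum
      by (rule sum.cong[OF refl]) (simp add: mm_scale_l mm_scale_r coef)
  qed
  also have "\<dots> = X ** (\<Sum>N<?M+Kb. scaleM (t^N / fact N) (mpow d N))"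
    by (simp add: mm_sum_l mm_scale_l)
  also have "\<dots> = X ** expM t d" using expM_long[of "CARD('n) + Kb" t] by simp
  finally show ?thesis by simp
qed

end

context setting
begin

lemma pres_iff: "(\<forall>i. \<forall>w\<in>(filt deg i :: ('a^'n) set). F *v w \<in> filt deg i) \<longleftrightarrow> (\<forall>k<0. comp deg k (F::'a^'n^'n) = 0)"
proof
  assume h: "\<forall>k<0. comp deg k F = 0"
  show "\<forall>i. \<forall>w\<in>(filt deg i :: ('a^'n) set). F *v w \<in> filt deg i"
  proof (intro allI ballI)
    fix i and w :: "'a^'n" assume w: "w \<in> filt deg i"
    show "F *v w \<in> filt deg i" unfolding filt_def
    proof (intro CollectI allI impI)
      fix j assume j: "deg j < i"
      have "F$j$m * w$m = 0" for m
      proof (cases "deg m < i")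
        case True then show ?thesis using w by (simp add: filt_def)
      next
        case False
        have "comp deg (deg j - deg m) F $ j $ m = F$j$m" by simp
        moreover have "comp deg (deg j - deg m) F = 0" using h False j by simp
        ultimately show ?thesis by simp
      qed
      then show "(F *v w) $ j = 0" by (simp add: matrix_vector_mult_def del: mult_eq_0_iff)
    qed
  qed
next
  assume h: "\<forall>i. \<forall>w\<in>(filt deg i :: ('a^'n) set). F *v w \<in> filt deg i"
  show "\<forall>k<0. comp deg k F = 0"
  proof (intro allI impI, rule ccontr)
    fix k :: int assume k: "k < 0" and ne: "comp deg k F \<noteq> 0"
    then obtain j m where jm: "comp deg k F $ j $ m \<noteq> 0" by (auto simp: vec_eq_iff)
    then have dj: "deg j = deg m + k" and Fjm: "F$j$m \<noteq> 0" by (auto split: if_splits)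
    define w :: "'a^'n" where "w = (\<chi> l. if l = m then 1 else 0)"
    have "w \<in> filt deg (deg m)" by (simp add: filt_def w_def)
    then have "F *v w \<in> filt deg (deg m)" using h by blast
    moreover have "(F *v w) $ j = F$j$m"
      by (simp add: matrix_vector_mult_def w_def if_distrib[of "\<lambda>x. _ * x"] cong: if_cong)
    ultimately show False using dj k Fjm by (simp add: filt_def)
  qed
qed

lemma exp_inv': "expM (-t) d ** expM t d = mat 1"
  using exp_inv[of "-t"] by simp

lemma nne_iff: "X \<in> nne deg g d \<longleftrightarrow> X \<in> umax deg g d \<and> (\<forall>t. \<forall>k<0. comp deg k (Fm t X) = 0)"
proof -
  have eq: "(\<forall>i. \<forall>v \<in> (\<lambda>w. expM t d *v w) ` filt deg i. X *v v \<in> (\<lambda>w. expM t d *v w) ` filt deg i)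
     \<longleftrightarrow> (\<forall>i. \<forall>w\<in>(filt deg i :: ('a^'n) set). Fm t X *v w \<in> filt deg i)" for t
  proof
    assume h: "\<forall>i. \<forall>w\<in>(filt deg i :: ('a^'n) set). Fm t X *v w \<in> filt deg i"
    show "\<forall>i. \<forall>v \<in> (\<lambda>w. expM t d *v w) ` filt deg i. X *v v \<in> (\<lambda>w. expM t d *v w) ` filt deg i"
    proof (intro allI ballI)
      fix i v assume "v \<in> (\<lambda>w. expM t d *v w) ` filt deg i"
      then obtain w where w: "w \<in> filt deg i" "v = expM t d *v w" by blast
      have "X *v v = expM t d *v (Fm t X *v w)"
        by (simp add: w(2) matrix_vector_mul_assoc conj)
      then show "X *v v \<in> (\<lambda>w. expM t d *v w) ` filt deg i" using h w(1) by blast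
    qed
  next
    assume h: "\<forall>i. \<forall>v \<in> (\<lambda>w. expM t d *v w) ` filt deg i. X *v v \<in> (\<lambda>w. expM t d *v w) ` filt deg i"
    show "\<forall>i. \<forall>w\<in>(filt deg i :: ('a^'n) set). Fm t X *v w \<in> filt deg i"
    proof (intro allI ballI)
      fix i and w :: "'a^'n" assume w: "w \<in> filt deg i"
      then have "X *v (expM t d *v w) \<in> (\<lambda>w. expM t d *v w) ` filt deg i" using h by blast
      then obtain w' where w': "w' \<in> filt deg i" "X *v (expM t d *v w) = expM t d *v w'" by blast
      have "expM t d *v (Fm t X *v w) = expM t d *v w'"
        using w'(2) by (simp add: matrix_vector_mul_assoc conj)
      then have "expM (-t) d *v (expM t d *v (Fm t X *v w)) = expM (-t) d *v (expM t d *v w')" by simp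
      then have "Fm t X *v w = w'" by (simp add: matrix_vector_mul_assoc matrix_mul_assoc exp_inv')
      then show "Fm t X *v w \<in> filt deg i" using w' by simp
    qed
  qed
  show ?thesis unfolding nne_def using eq pres_iff by auto
qed

lemma Fm_diff: "Fm t (A - B) = Fm t A - Fm t B"
  by (simp add: Fm_def adp_diff scaleM_diff sum_subtractf)

lemma Nglob_Fm: assumes X: "X \<in> Nglob deg g d" and k: "k < 0"
  shows "comp deg k (Fm t X) = 0"
proof -
  have z: "adp d n (comp deg (k + int n) X) = 0" for n
  proof (cases "k + int n < 0")
    case True then show ?thesis using X by (simp add: Nglob_def)
  next
    case False
    define m where "m = nat (k + int n + 1)"
    have W: "comp deg (k + int n) X \<in> Nc deg g d m" using X False by (simp add: Nglob_def m_def)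
    then have "rbn d m (comp deg (k + int n) X) = 0" by (simp add: Nc_def)
    then have a0: "adp d m (comp deg (k + int n) X) = 0" using rbn_adp[of d m] by (simp add: scaleM_eq_0_iff)
    have "m \<le> n" using k False by (simp add: m_def)
    then have "adp d n (comp deg (k + int n) X) = adp d (n - m) (adp d m (comp deg (k + int n) X))"
      by (simp add: adp_add_nat[symmetric])
    then show ?thesis using a0 by simp
  qed
  show ?thesis by (simp add: Fm_def comp_sum comp_scale comp_adp z)
qed

end

context setting2
begin

lemma Fm_sv: "comp deg (-1) (Fm t (sv a b c)) = scaleM (a + 2 * b * t - c * t^2) d"
proof -
  define f where "f n = scaleM ((-t)^n / fact n) (adp d n (comp deg (-1 + int n) (sv a b c)))" for n
  have "comp deg (-1) (Fm t (sv a b c)) = (\<Sum>n<Kb. f n)"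
    by (simp add: Fm_def comp_sum comp_scale comp_adp f_def)
  also have "\<dots> = (\<Sum>n<3. f n)"
  proof (rule sum.mono_neutral_right)
    show "{..<3} \<subseteq> {..<Kb}" by (auto simp: Kb_def)
    show "\<forall>i\<in>{..<Kb} - {..<3}. f i = 0" by (auto simp: f_def comp_sv)
  qed simp
  also have "\<dots> = f 0 + f 1 + f 2" by (simp add: numeral_3_eq_3 numeral_2_eq_2)
  also have "\<dots> = scaleM (a + 2 * b * t - c * t^2) d"
  proof -
    have dH: "bracket d H = scaleM (-2) d" using rHd bracket_antisym[of d H] by (simp add: vec_eq_iff)
    have f0: "f 0 = scaleM a d" by (simp add: f_def comp_sv)
    have f1: "f 1 = scaleM (-t * b * -2) d" by (simp add: f_def comp_sv adp_Suc bracket_scale_r dH mult_ac)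
    have f2: "f 2 = scaleM (t^2 / 2 * c * -2) d"
      by (simp add: f_def comp_sv numeral_2_eq_2 adp_Suc bracket_scale_r rdY dH mult_ac)
    show "f 0 + f 1 + f 2 = scaleM (a + 2 * b * t - c * t^2) d"
      unfolding f0 f1 f2 by (simp add: vec_eq_iff algebra_simps)
  qed
  finally show ?thesis .
qed

lemma nne_eq: "nne deg g d = Nglob deg g d"
proof
  show "Nglob deg g d \<subseteq> nne deg g d"
    using Nglob_umax Nglob_Fm by (auto simp: nne_iff)
next
  show "nne deg g d \<subseteq> Nglob deg g d"
  proof
    fix X assume "X \<in> nne deg g d"
    then have XU: "X \<in> umax deg g d" and XF: "\<And>t k. k < 0 \<Longrightarrow> comp deg k (Fm t X) = 0"
      by (auto simp: nne_iff)
    obtain a b c where Z: "X - sv a b c \<in> Nglob deg g d" using decomp_ex[OF XU] by blast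
    have sv: "sv a b c = X - (X - sv a b c)" by simp
    have coef0: "a + 2 * b * t - c * t^2 = 0" for t
    proof -
      have "Fm t (sv a b c) = Fm t X - Fm t (X - sv a b c)" using Fm_diff[of t X "X - sv a b c"] by simp
      then have "comp deg (-1) (Fm t (sv a b c)) = 0"
        by (simp add: comp_diff XF Nglob_Fm[OF Z])
      then have "scaleM (a + 2 * b * t - c * t^2) d = 0" by (simp add: Fm_sv)
      then show ?thesis using dnz by (simp add: scaleM_eq_0_iff)
    qed
    have a: "a = 0" using coef0[of 0] by simp
    have e1: "2 * b - c = 0" using coef0[of 1] a by simp
    have e2: "- 2 * b - c = 0" using coef0[of "-1"] a by simp
    have c2: "c = 2 * b" using e1 by simp
    have "4 * b = 0" using e2 unfolding c2 by simp
    then have b: "b = 0" by simp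
    then have c: "c = 0" using c2 by simp
    have "sv a b c = 0" by (simp add: sv_def a b c)
    then show "X \<in> Nglob deg g d" using Z by simp
  qed
qed

end

theorem proposition8p1:
  fixes deg :: "'n::finite \<Rightarrow> int"
    and g :: "('a::field_char_0^'n^'n) set"
    and \<delta> H Y :: "'a^'n^'n"
  assumes neg: "\<forall>j. deg j < 0"
    and red: "reductive g"
    and grd: "graded_sub deg g"
    and d: "\<delta> \<in> g" "homog deg (-1) \<delta>" "\<delta> \<noteq> 0"
    and HY: "H \<in> g" "homog deg 0 H" "Y \<in> g" "homog deg 1 Y"
    and rel: "bracket H \<delta> = scaleM 2 \<delta>" "bracket H Y = scaleM (-2) Y" "bracket \<delta> Y = H"
  shows "(\<forall>a b c. scaleM a \<delta> + scaleM b H + scaleM c Y = 0 \<longrightarrow> a = 0 \<and> b = 0 \<and> c = 0)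
    \<and> {scaleM a \<delta> + scaleM b H + scaleM c Y |a b c. True} \<subseteq> umax deg g \<delta>
    \<and> lie_ideal (umax deg g \<delta>) (nmax deg g \<delta>)
    \<and> (\<forall>X \<in> umax deg g \<delta>. \<exists>!(a, b, c).
          X - (scaleM a \<delta> + scaleM b H + scaleM c Y) \<in> nmax deg g \<delta>)
    \<and> nmax deg g \<delta> = nne deg g \<delta>"
proof -
  have lie: "lie_subalgebra g" using red by (simp add: reductive_def)
  interpret S: setting2 deg g \<delta> H Y
    by unfold_locales (use lie d HY rel in auto)
  have sv: "\<And>a b c. scaleM a \<delta> + scaleM b H + scaleM c Y = S.sv a b c" by (simp add: S.sv_def)
  have ex1: "\<forall>X \<in> umax deg g \<delta>. \<exists>!(a, b, c). X - S.sv a b c \<in> Nglob deg g \<delta>"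
  proof
    fix X assume X: "X \<in> umax deg g \<delta>"
    obtain a b c where abc: "X - S.sv a b c \<in> Nglob deg g \<delta>" using S.decomp_ex[OF X] by blast
    show "\<exists>!(a, b, c). X - S.sv a b c \<in> Nglob deg g \<delta>"
    proof (rule ex1I[of _ "(a, b, c)"])
      show "case (a, b, c) of (a, b, c) \<Rightarrow> X - S.sv a b c \<in> Nglob deg g \<delta>" using abc by simp
    next
      fix y assume y: "case y of (a, b, c) \<Rightarrow> X - S.sv a b c \<in> Nglob deg g \<delta>"
      obtain a' b' c' where yy: "y = (a', b', c')" by (cases y) auto
      then have "X - S.sv a' b' c' \<in> Nglob deg g \<delta>" using y by simp
      then have "a' = a \<and> b' = b \<and> c' = c" using S.decomp_unique abc by blast
      then show "y = (a, b, c)" using yy by simp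
    qed
  qed
  have c1: "\<forall>a b c. S.sv a b c = 0 \<longrightarrow> a = 0 \<and> b = 0 \<and> c = 0" using S.sv_indep by blast
  have c2: "{S.sv a b c |a b c. True} \<subseteq> umax deg g \<delta>" using S.sv_umax by blast
  show ?thesis
    unfolding sv S.nmax_eq S.nne_eq
    using c1 c2 ex1 S.Nglob_lie_ideal by blast
qed


end
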